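(* Fix $\Theta\in\Omega$ and let $\mu$ be as in the setup. Almost surely $\mu[0,l]\sim\mathbb E[\mu[0,l]]$ as $l\to\infty$.
   Context: Let $\Omega$ be the set of sequences $\Theta=(\theta_i)_{i\ge 0}$ of nonnegative reals with $\sum_{i\ge0}\theta_i^2=1$, $\theta_1\ge\theta_2\ge\cdots$, and either $\theta_0\ne0$ or $\sum_{i\ge1}\theta_i=\infty$. For $\Theta\in\Omega$, let $(X_i)_{i\ge1}$ be independent exponential random variables with respective rates $\theta_i$ (a rate-$0$ variable equals $+\infty$), and let $\mu:=\theta_0^2\,dx+\sum_{i\ge1}\theta_i\delta_{X_i}$, a random measure on $\mathbb R^+$. *)

theory Defs
  imports "HOL-Probability.Probability" "HOL-Library.Landau_Symbols"
begin

definition in_Omega :: "(nat \<Rightarrow> real) \<Rightarrow> bool" where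
  "in_Omega \<theta> \<longleftrightarrow> (\<forall>i. 0 \<le> \<theta> i) \<and> ((\<lambda>i. (\<theta> i)\<^sup>2) sums 1)
     \<and> (\<forall>i\<ge>1. \<theta> (Suc i) \<le> \<theta> i)
     \<and> (\<theta> 0 \<noteq> 0 \<or> \<not> summable (\<lambda>i. \<theta> (Suc i)))"

definition rand_mu :: "(nat \<Rightarrow> real) \<Rightarrow> (nat \<Rightarrow> 'a \<Rightarrow> real) \<Rightarrow> 'a \<Rightarrow> real set \<Rightarrow> ennreal" where
  "rand_mu \<theta> X w A = ennreal ((\<theta> 0)\<^sup>2) * emeasure lborel (A \<inter> {0..})
      + (\<Sum>i. ennreal (\<theta> (Suc i)) * indicator A (X (Suc i) w))"

end

theory Submission
  imports Defs "HOL-Real_Asymp.Real_Asymp"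
begin


lemma aux_div: "(b::real) \<noteq> 0 \<Longrightarrow> x / b^2 * (b / c)^2 = x / c^2"
  by (simp add: power_divide)

lemma det_asymp:
  fixes F :: "real \<Rightarrow> ennreal" and m :: "real \<Rightarrow> real" and L :: "nat \<Rightarrow> real"
  assumes Fmono: "\<And>a b. a \<le> b \<Longrightarrow> F a \<le> F b"
    and mmono: "\<And>a b. 0 \<le> a \<Longrightarrow> a \<le> b \<Longrightarrow> m a \<le> m b"
    and Lnn: "\<And>n. 0 \<le> L n" and mL: "\<And>n. m (L n) = (real n)\<^sup>2"
    and minf: "filterlim m at_top at_top"
    and ev: "eventually (\<lambda>n. F (L n) \<noteq> \<infinity> \<and> \<bar>enn2real (F (L n)) - (real n)\<^sup>2\<bar> < real n) sequentially"
  shows "(\<lambda>l. enn2real (F l)) \<sim>[at_top] m"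
proof -
  define f where "f l = enn2real (F l)" for l
  define a where "a n = f (L n) / (real n)\<^sup>2" for n
  have a1: "a \<longlonglongrightarrow> 1"
  proof -
    have "(\<lambda>n. a n - 1) \<longlonglongrightarrow> 0"
    proof (rule Lim_null_comparison)
      show "(\<lambda>n. 1 / real n) \<longlonglongrightarrow> 0" by real_asymp
      show "\<forall>\<^sub>F n in sequentially. norm (a n - 1) \<le> 1 / real n"
        using ev eventually_gt_at_top[of 0]
      proof eventually_elim
        case (elim n)
        then have "\<bar>f (L n) - (real n)\<^sup>2\<bar> < real n" by (simp add: f_def)
        moreover have "a n - 1 = (f (L n) - (real n)\<^sup>2) / (real n)\<^sup>2"
          using elim by (simp add: a_def field_simps)
        ultimately have "\<bar>a n - 1\<bar> \<le> real n / (real n)\<^sup>2"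
          using elim by (simp add: abs_div divide_right_mono)
        also have "\<dots> = 1 / real n" using elim by (simp add: power2_eq_square)
        finally show ?case by simp
      qed
    qed
    then show ?thesis using Lim_null by (metis tendsto_add_const_iff diff_add_cancel add.commute)
  qed
  define U where "U k = a (k + 1) * ((real k + 1) / real k)\<^sup>2" for k
  define D where "D k = a (k - 1) * ((real k - 1) / (real k + 1))\<^sup>2" for k
  have U1: "U \<longlonglongrightarrow> 1"
  proof -
    have "(\<lambda>k. a (k+1)) \<longlonglongrightarrow> 1" using a1 by (rule LIMSEQ_Suc[unfolded Suc_eq_plus1])
    moreover have "(\<lambda>k::nat. ((real k + 1)/real k)^2) \<longlonglongrightarrow> 1" by real_asymp
    ultimately show ?thesis unfolding U_def using tendsto_mult by fastforce
  qed
  have D1: "D \<longlonglongrightarrow> 1"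
  proof -
    have "filterlim (\<lambda>k::nat. k - 1) sequentially sequentially"
      by (simp add: filterlim_sequentially_Suc[symmetric] filterlim_ident)
    then have "(\<lambda>k. a (k-1)) \<longlonglongrightarrow> 1" using a1 by (rule filterlim_compose[rotated])
    moreover have "(\<lambda>k::nat. ((real k - 1)/(real k + 1))^2) \<longlonglongrightarrow> 1" by real_asymp
    ultimately show ?thesis unfolding D_def using tendsto_mult by fastforce
  qed
  define kf where "kf l = nat \<lfloor>sqrt (m l)\<rfloor>" for l
  have kf_lim: "filterlim kf sequentially at_top"
    unfolding filterlim_at_top
  proof
    fix Z :: nat
    have "eventually (\<lambda>l. real Z ^ 2 \<le> m l) at_top"
      using minf by (simp add: filterlim_at_top)
    then show "eventually (\<lambda>l. Z \<le> kf l) at_top"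
    proof eventually_elim
      case (elim l)
      then have "real Z \<le> sqrt (m l)" by (metis real_le_rsqrt)
      then show ?case unfolding kf_def by (metis le_nat_floor of_nat_le_iff le_floor_iff of_int_of_nat_eq floor_of_nat nat_int)
    qed
  qed
  obtain N where N: "\<And>n. n \<ge> N \<Longrightarrow> F (L n) \<noteq> \<infinity>"
    using ev unfolding eventually_sequentially by blast
  have bounds: "eventually (\<lambda>l. D (kf l) \<le> f l / m l \<and> f l / m l \<le> U (kf l)) at_top"
    using eventually_ge_at_top[of 0] filterlim_iff[THEN iffD1, OF kf_lim, rule_format, OF eventually_ge_at_top[of "N + 2"]]
  proof eventually_elim
    case (elim l)
    define k where "k = kf l"
    have k2: "k \<ge> N + 2" using elim k_def by simp
    have km: "real k \<le> sqrt (m l)" "sqrt (m l) < real k + 1"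
      using k2 unfolding k_def kf_def by linarith+
    have mpos: "m l \<ge> 0" using km k2 by (metis not_le real_sqrt_lt_0_iff less_le_trans of_nat_0_le_iff)
    have kk1: "(real k)\<^sup>2 \<le> m l"
      using km(1) power_mono[OF km(1), of 2] mpos by simp
    have kk2: "m l < (real k + 1)\<^sup>2"
      using power_strict_mono[OF km(2), of 2] mpos by simp
    note kk = kk1 kk2
    have lo: "L (k - 1) \<le> l"
    proof (rule ccontr)
      assume "\<not> ?thesis"
      then have "m l \<le> m (L (k - 1))" using mmono elim by auto
      also have "\<dots> = (real k - 1)\<^sup>2" using mL k2 by (simp add: of_nat_diff)
      also have "\<dots> < (real k)\<^sup>2" using k2 by (simp add: power2_eq_square algebra_simps)
      finally show False using kk by simp
    qed
    have hi: "l \<le> L (k + 1)"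
    proof (rule ccontr)
      assume "\<not> ?thesis"
      then have "m (L (k + 1)) \<le> m l" using mmono Lnn by auto
      then show False using mL kk by (simp add: add.commute)
    qed
    have fin: "F (L (k + 1)) \<noteq> \<infinity>" using N k2 by simp
    have f1: "f (L (k - 1)) \<le> f l" unfolding f_def
      using Fmono[OF lo] Fmono[OF hi] fin by (simp add: enn2real_mono top.not_eq_extremum)
    have f2: "f l \<le> f (L (k + 1))" unfolding f_def
      using Fmono[OF hi] fin by (simp add: enn2real_mono top.not_eq_extremum)
    have f0: "0 \<le> f (L (k - 1))" unfolding f_def by simp
    have kpos: "(real k)\<^sup>2 > 0" using k2 by simp
    have mp: "m l > 0" using kk kpos by linarith
    have "f l / m l \<le> f (L (k + 1)) / (real k)\<^sup>2"
      using f2 kk mp kpos f0 f1 by (meson frac_le order.trans)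
    also have "\<dots> = U k" unfolding U_def a_def using k2 aux_div[of "real k + 1" "f (L (k + 1))" "real k"]
      by (simp add: add.commute)
    finally have up: "f l / m l \<le> U k" .
    have "D k = f (L (k - 1)) / (real k + 1)\<^sup>2" unfolding D_def a_def using k2 aux_div[of "real k - 1" "f (L (k - 1))" "real k + 1"]
      by (simp add: of_nat_diff)
    also have "\<dots> \<le> f l / m l"
      using f1 f0 kk mp by (meson frac_le order.trans less_imp_le)
    finally show ?case using up k_def by simp
  qed
  have "((\<lambda>l. f l / m l) \<longlongrightarrow> 1) at_top"
  proof (rule tendsto_sandwich[OF _ _ filterlim_compose[OF D1 kf_lim] filterlim_compose[OF U1 kf_lim]])
    show "\<forall>\<^sub>F l in at_top. D (kf l) \<le> f l / m l" using bounds by (auto elim: eventually_mono)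
    show "\<forall>\<^sub>F l in at_top. f l / m l \<le> U (kf l)" using bounds by (auto elim: eventually_mono)
  qed
  then show ?thesis unfolding f_def by (rule asymp_equivI')
qed


definition gg :: "real \<Rightarrow> real \<Rightarrow> real" where
  "gg t x = t * (1 - exp (- t * x))"

lemma gg_nonneg: "0 \<le> t \<Longrightarrow> 0 \<le> x \<Longrightarrow> 0 \<le> gg t x"
  by (simp add: gg_def mult_nonneg_nonneg)

lemma gg_le: "0 \<le> t \<Longrightarrow> 0 \<le> x \<Longrightarrow> gg t x \<le> t\<^sup>2 * x"
proof -
  assume t: "0 \<le> t" and x: "0 \<le> x"
  have "1 - t * x \<le> exp (- t * x)" using exp_ge_add_one_self[of "- t * x"] by simp
  then have "1 - exp (- t * x) \<le> t * x" by simp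
  then have "t * (1 - exp (- t * x)) \<le> t * (t * x)" using t by (rule mult_left_mono)
  then show ?thesis by (simp add: gg_def power2_eq_square mult.assoc)
qed

lemma gg_diff:
  assumes t: "0 \<le> t" and a: "0 \<le> a" and ab: "a \<le> b"
  shows "0 \<le> gg t b - gg t a" "gg t b - gg t a \<le> t\<^sup>2 * (b - a)"
proof -
  have eq: "gg t b - gg t a = t * (exp (- t * a) * (1 - exp (- t * (b - a))))"
    by (simp add: gg_def algebra_simps flip: exp_add)
  have e1: "0 \<le> 1 - exp (- t * (b - a))" using t ab by (simp add: mult_nonneg_nonneg)
  show "0 \<le> gg t b - gg t a" unfolding eq using t e1 by simp
  have "1 - t * (b - a) \<le> exp (- t * (b - a))" using exp_ge_add_one_self[of "- t * (b - a)"] by simp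
  then have e2: "1 - exp (- t * (b - a)) \<le> t * (b - a)" by simp
  have "exp (- t * a) \<le> 1" using t a by (simp add: mult_nonneg_nonneg)
  then have "exp (- t * a) * (1 - exp (- t * (b - a))) \<le> 1 * (t * (b - a))"
    using e1 e2 by (intro mult_mono) auto
  then have "t * (exp (- t * a) * (1 - exp (- t * (b - a)))) \<le> t * (t * (b - a))"
    using t by (intro mult_left_mono) auto
  then show "gg t b - gg t a \<le> t\<^sup>2 * (b - a)" unfolding eq by (simp add: power2_eq_square mult.assoc)
qed

lemma gg_summable:
  assumes th: "\<And>i. 0 \<le> th i" and s: "(\<lambda>i. (th i)\<^sup>2) sums s" and x: "0 \<le> x"
  shows "summable (\<lambda>i. gg (th i) x)"
proof (rule summable_comparison_test)
  show "\<exists>N. \<forall>n\<ge>N. norm (gg (th n) x) \<le> (th n)\<^sup>2 * x"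
    using gg_nonneg gg_le th x by auto
  show "summable (\<lambda>n. (th n)\<^sup>2 * x)" using s by (intro summable_mult2) (auto simp: sums_iff)
qed

lemma em_lip:
  assumes th: "\<And>i. 0 \<le> th i" and s: "(\<lambda>i. (th i)\<^sup>2) sums s" and c: "0 \<le> c" and cs: "c + s = 1"
    and a: "0 \<le> a" and ab: "a \<le> b"
  shows "c * a + (\<Sum>i. gg (th i) a) \<le> c * b + (\<Sum>i. gg (th i) b)"
    "(c * b + (\<Sum>i. gg (th i) b)) - (c * a + (\<Sum>i. gg (th i) a)) \<le> b - a"
proof -
  have b: "0 \<le> b" using a ab by simp
  have sa: "summable (\<lambda>i. gg (th i) a)" and sb: "summable (\<lambda>i. gg (th i) b)"
    using gg_summable[OF th s] a b by auto
  have d: "(\<Sum>i. gg (th i) b) - (\<Sum>i. gg (th i) a) = (\<Sum>i. gg (th i) b - gg (th i) a)"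
    using suminf_diff[OF sb sa] by simp
  have sd: "summable (\<lambda>i. gg (th i) b - gg (th i) a)" by (rule summable_diff[OF sb sa])
  have "0 \<le> (\<Sum>i. gg (th i) b - gg (th i) a)"
    using gg_diff(1)[OF th a ab] sd by (intro suminf_nonneg) auto
  moreover have "c * a \<le> c * b" by (rule mult_left_mono[OF ab c])
  ultimately show "c * a + (\<Sum>i. gg (th i) a) \<le> c * b + (\<Sum>i. gg (th i) b)" using d by linarith
  have ss: "(\<lambda>i. (th i)\<^sup>2 * (b - a)) sums (s * (b - a))" using s by (rule sums_mult2)
  have "(\<Sum>i. gg (th i) b - gg (th i) a) \<le> s * (b - a)"
    using sums_le[OF _ summable_sums[OF sd] ss] gg_diff(2)[OF th a ab] by blast
  then show "(c * b + (\<Sum>i. gg (th i) b)) - (c * a + (\<Sum>i. gg (th i) a)) \<le> b - a"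
  proof -
    have "(c * b + (\<Sum>i. gg (th i) b)) - (c * a + (\<Sum>i. gg (th i) a)) = c * (b - a) + (\<Sum>i. gg (th i) b - gg (th i) a)"
      using d right_diff_distrib[of c b a] by linarith
    also have "\<dots> \<le> c * (b - a) + s * (b - a)" using \<open>(\<Sum>i. gg (th i) b - gg (th i) a) \<le> s * (b - a)\<close> by simp
    also have "\<dots> = (c + s) * (b - a)" by (rule distrib_right[symmetric])
    finally show ?thesis using cs by simp
  qed
qed

lemma gg_lim: "0 \<le> t \<Longrightarrow> ((\<lambda>x. gg t x) \<longlongrightarrow> t) at_top"
proof (cases "t = 0")
  case True then show ?thesis by (simp add: gg_def)
next
  case False
  assume "0 \<le> t"
  then have t: "t > 0" using False by simp
  have "((\<lambda>x. exp (- t * x)) \<longlongrightarrow> 0) at_top" using t by real_asymp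
  then have "((\<lambda>x. t * (1 - exp (- t * x))) \<longlongrightarrow> t * (1 - 0)) at_top"
    by (intro tendsto_intros)
  then show ?thesis by (simp add: gg_def)
qed

lemma em_cont:
  assumes th: "\<And>i. 0 \<le> th i" and s: "(\<lambda>i. (th i)\<^sup>2) sums s" and c: "0 \<le> c" and cs: "c + s = 1"
  shows "continuous_on {0..} (\<lambda>l. c * l + (\<Sum>i. gg (th i) l))"
  unfolding continuous_on_iff
proof (intro ballI allI impI)
  fix x e :: real assume x: "x \<in> {0..}" and e: "0 < e"
  show "\<exists>d>0. \<forall>x'\<in>{0..}. dist x' x < d \<longrightarrow> dist (c * x' + (\<Sum>i. gg (th i) x')) (c * x + (\<Sum>i. gg (th i) x)) < e"
  proof (intro exI[of _ e] conjI ballI impI e)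
    fix x' :: real assume x': "x' \<in> {0..}" and d: "dist x' x < e"
    show "dist (c * x' + (\<Sum>i. gg (th i) x')) (c * x + (\<Sum>i. gg (th i) x)) < e"
    proof (cases "x \<le> x'")
      case True
      with em_lip[OF th s c cs _ True] x d show ?thesis by (auto simp: dist_real_def)
    next
      case False
      with em_lip[OF th s c cs _, of x' x] x' d show ?thesis by (auto simp: dist_real_def)
    qed
  qed
qed

lemma em_inf:
  assumes th: "\<And>i. 0 \<le> th i" and s: "(\<lambda>i. (th i)\<^sup>2) sums s" and c: "0 \<le> c"
    and nz: "c \<noteq> 0 \<or> \<not> summable th"
  shows "filterlim (\<lambda>l. c * l + (\<Sum>i. gg (th i) l)) at_top at_top"
  unfolding filterlim_at_top
proof
  fix Z :: real
  have pos: "eventually (\<lambda>l. c * l \<le> c * l + (\<Sum>i. gg (th i) l)) at_top"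
    using eventually_ge_at_top[of 0]
  proof eventually_elim
    case (elim l)
    have "0 \<le> (\<Sum>i. gg (th i) l)"
      using gg_summable[OF th s elim] gg_nonneg[OF th elim] by (intro suminf_nonneg) auto
    then show ?case by simp
  qed
  show "eventually (\<lambda>l. Z \<le> c * l + (\<Sum>i. gg (th i) l)) at_top"
  proof (cases "c = 0")
    case False
    then have cp: "c > 0" using c by simp
    have "eventually (\<lambda>l. Z / c \<le> l) at_top" by (rule eventually_ge_at_top)
    then have "eventually (\<lambda>l. Z \<le> c * l) at_top"
      by eventually_elim (use cp in \<open>simp add: field_simps\<close>)
    with pos show ?thesis by eventually_elim simp
  next
    case True
    then have ns: "\<not> summable th" using nz by simp
    have "\<exists>N. Z + 1 < sum th {..<N}"
    proof (rule ccontr)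
      assume "\<not> ?thesis"
      then have "\<And>N. sum th {..<N} \<le> Z + 1" by (simp add: not_less)
      then have "summable th" using th by (intro summableI_nonneg_bounded) auto
      with ns show False by simp
    qed
    then obtain N where N: "Z + 1 < sum th {..<N}" by blast
    have "((\<lambda>l. \<Sum>i<N. gg (th i) l) \<longlongrightarrow> (\<Sum>i<N. th i)) at_top"
      by (intro tendsto_sum gg_lim th)
    then have ev: "eventually (\<lambda>l. Z < (\<Sum>i<N. gg (th i) l)) at_top"
      using N by (intro order_tendstoD) auto
    show ?thesis using ev eventually_ge_at_top[of 0]
    proof eventually_elim
      case (elim l)
      have "(\<Sum>i<N. gg (th i) l) \<le> (\<Sum>i. gg (th i) l)"
        using gg_summable[OF th s elim(2)] gg_nonneg[OF th elim(2)] by (intro sum_le_suminf) auto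
      then show ?case using elim True by simp
    qed
  qed
qed



lemma (in prob_space) var_bound:
  fixes Y :: "nat \<Rightarrow> 'a \<Rightarrow> real" and t :: "nat \<Rightarrow> real" and A :: "real set"
  assumes indep: "indep_vars (\<lambda>_. borel) Y I" and J: "finite J" "J \<subseteq> I"
    and A[measurable]: "A \<in> sets borel" and t: "\<And>i. 0 \<le> t i"
  shows "(\<integral>\<^sup>+w. ennreal ((\<Sum>i\<in>J. t i * (indicator A (Y i w) - prob (Y i -` A \<inter> space M)))\<^sup>2) \<partial>M)
           \<le> ennreal (\<Sum>i\<in>J. (t i)\<^sup>2)"
proof -
  define p where "p i = prob (Y i -` A \<inter> space M)" for i
  define Z where "Z i w = t i * (indicator A (Y i w) - p i)" for i w
  have Ymeas[measurable]: "\<And>i. i \<in> I \<Longrightarrow> Y i \<in> borel_measurable M"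
    using indep unfolding indep_vars_def by auto
  have p01: "0 \<le> p i" "p i \<le> 1" for i unfolding p_def by auto
  have Zmeas[measurable]: "Z i \<in> borel_measurable M" if "i \<in> I" for i
    unfolding Z_def using that by measurable
  have Zbound: "\<bar>Z i w\<bar> \<le> t i" for i w
  proof -
    have "\<bar>indicator A (Y i w) - p i\<bar> \<le> (1::real)" using p01[of i] by (auto simp: indicator_def)
    then have "t i * \<bar>indicator A (Y i w) - p i\<bar> \<le> t i * 1" using t[of i] by (intro mult_left_mono) auto
    then show ?thesis unfolding Z_def using t[of i] by (simp add: abs_mult)
  qed
  have Zint: "integrable M (Z i)" if "i \<in> I" for i
    using that Zbound by (intro integrable_const_bound[where B="t i"]) auto
  have Zprodint: "integrable M (\<lambda>w. Z i w * Z j w)" if "i \<in> I" "j \<in> I" for i j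
  proof (intro integrable_const_bound[where B="t i * t j"])
    show "AE w in M. norm (Z i w * Z j w) \<le> t i * t j"
      using Zbound[of i] Zbound[of j] t by (auto simp: abs_mult intro!: mult_mono)
  qed (use that in measurable)
  have EZ: "(\<integral>w. Z i w \<partial>M) = 0" if "i \<in> I" for i
  proof -
    have e1: "(\<integral>w. indicator A (Y i w) \<partial>M) = (\<integral>w. indicator (Y i -` A \<inter> space M) w \<partial>M :: real)"
      by (intro Bochner_Integration.integral_cong) (auto simp: indicator_def)
    have "(\<integral>w. indicator (Y i -` A \<inter> space M) w \<partial>M :: real) = p i" unfolding p_def by (simp add: Bochner_Integration.integral_indicator Int_assoc)
    with e1 have "(\<integral>w. indicator A (Y i w) \<partial>M :: real) = p i" by simp
    moreover have "integrable M (\<lambda>w. indicator A (Y i w) :: real)"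
      using that by (intro integrable_const_bound[where B=1]) (auto simp: indicator_def)
    ultimately show ?thesis unfolding Z_def using that by (simp add: prob_space)
  qed
  have Zindep: "indep_vars (\<lambda>_. borel) Z I"
    unfolding Z_def by (rule indep_vars_compose2[OF indep, where Y="\<lambda>i x. t i * (indicator A x - p i)"]) measurable
  have cross: "(\<integral>w. Z i w * Z j w \<partial>M) = 0" if "i \<in> I" "j \<in> I" "i \<noteq> j" for i j
  proof -
    have ij: "indep_vars (\<lambda>_. borel) Z {i, j}" using that by (intro indep_vars_subset[OF Zindep]) auto
    have "(\<integral>w. (\<Prod>k\<in>{i,j}. Z k w) \<partial>M) = (\<Prod>k\<in>{i,j}. \<integral>w. Z k w \<partial>M)"
      using that ij Zint by (intro indep_vars_lebesgue_integral) auto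
    then show ?thesis using that EZ by simp
  qed
  have diag: "(\<integral>w. Z i w * Z i w \<partial>M) \<le> (t i)\<^sup>2" if "i \<in> I" for i
  proof -
    have "(\<integral>w. Z i w * Z i w \<partial>M) \<le> (\<integral>w. (t i)\<^sup>2 \<partial>M)"
    proof (intro integral_mono Zprodint that)
      fix w show "Z i w * Z i w \<le> (t i)\<^sup>2"
      proof -
        have "\<bar>Z i w\<bar> * \<bar>Z i w\<bar> \<le> t i * t i" using Zbound[of i w] by (intro mult_mono) auto
        then show ?thesis by (simp add: power2_eq_square)
      qed
    qed auto
    then show ?thesis by (simp add: prob_space)
  qed
  have sq: "(\<Sum>i\<in>J. Z i w)\<^sup>2 = (\<Sum>i\<in>J. \<Sum>j\<in>J. Z i w * Z j w)" for w
    by (simp add: power2_eq_square sum_product)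
  have "(\<integral>w. (\<Sum>i\<in>J. Z i w)\<^sup>2 \<partial>M) = (\<Sum>i\<in>J. \<Sum>j\<in>J. \<integral>w. Z i w * Z j w \<partial>M)"
  proof -
    have ij: "i \<in> I" "j \<in> I" if "i \<in> J" "j \<in> J" for i j using J that by auto
    have "(\<integral>w. (\<Sum>i\<in>J. \<Sum>j\<in>J. Z i w * Z j w) \<partial>M) = (\<Sum>i\<in>J. \<integral>w. (\<Sum>j\<in>J. Z i w * Z j w) \<partial>M)"
    proof (rule Bochner_Integration.integral_sum)
      fix i assume "i \<in> J"
      then show "integrable M (\<lambda>w. \<Sum>j\<in>J. Z i w * Z j w)" using J by (intro Bochner_Integration.integrable_sum Zprodint) auto
    qed
    also have "\<dots> = (\<Sum>i\<in>J. \<Sum>j\<in>J. \<integral>w. Z i w * Z j w \<partial>M)"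
    proof (rule sum.cong[OF refl])
      fix i assume "i \<in> J"
      then show "(\<integral>w. (\<Sum>j\<in>J. Z i w * Z j w) \<partial>M) = (\<Sum>j\<in>J. \<integral>w. Z i w * Z j w \<partial>M)"
        using J by (intro Bochner_Integration.integral_sum Zprodint) auto
    qed
    finally show ?thesis unfolding sq .
  qed
  also have "\<dots> = (\<Sum>i\<in>J. \<integral>w. Z i w * Z i w \<partial>M)"
  proof (intro sum.cong refl)
    fix i assume i: "i \<in> J"
    have "(\<Sum>j\<in>J. \<integral>w. Z i w * Z j w \<partial>M) = (\<Sum>j\<in>{i}. \<integral>w. Z i w * Z j w \<partial>M)"
      using i J cross by (intro sum.mono_neutral_right) auto
    then show "(\<Sum>j\<in>J. \<integral>w. Z i w * Z j w \<partial>M) = (\<integral>w. Z i w * Z i w \<partial>M)" by simp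
  qed
  also have "\<dots> \<le> (\<Sum>i\<in>J. (t i)\<^sup>2)" using J diag by (intro sum_mono) auto
  finally have le: "(\<integral>w. (\<Sum>i\<in>J. Z i w)\<^sup>2 \<partial>M) \<le> (\<Sum>i\<in>J. (t i)\<^sup>2)" .
  have intsq: "integrable M (\<lambda>w. (\<Sum>i\<in>J. Z i w)\<^sup>2)"
    unfolding sq using J by (intro Bochner_Integration.integrable_sum Zprodint) auto
  have "(\<integral>\<^sup>+w. ennreal ((\<Sum>i\<in>J. Z i w)\<^sup>2) \<partial>M) = ennreal (\<integral>w. (\<Sum>i\<in>J. Z i w)\<^sup>2 \<partial>M)"
    using intsq by (intro nn_integral_eq_integral) auto
  also have "\<dots> \<le> ennreal (\<Sum>i\<in>J. (t i)\<^sup>2)" using le by (rule ennreal_leI)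
  finally show ?thesis unfolding Z_def p_def .
qed



theorem mainTheorem8:
  fixes M :: "'a measure" and \<theta> :: "nat \<Rightarrow> real" and X :: "nat \<Rightarrow> 'a \<Rightarrow> real"
  assumes "prob_space M"
    and "in_Omega \<theta>"
    and "prob_space.indep_vars M (\<lambda>_. borel) X {1..}"
    and "\<And>i. 1 \<le> i \<Longrightarrow> 0 < \<theta> i \<Longrightarrow> distributed M lborel (X i) (exponential_density (\<theta> i))"
  shows "AE w in M. (\<lambda>l. enn2real (rand_mu \<theta> X w {0..l}))
           \<sim>[at_top] (\<lambda>l. enn2real (\<integral>\<^sup>+ v. rand_mu \<theta> X v {0..l} \<partial>M))"
proof -
  interpret prob_space M by fact
  note Om = assms(2)[unfolded in_Omega_def]
  define c where "c = (\<theta> 0)\<^sup>2"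
  define th where "th i = \<theta> (Suc i)" for i
  have thnn: "\<And>i. 0 \<le> th i" using Om by (simp add: th_def)
  have s: "(\<lambda>i. (th i)\<^sup>2) sums (1 - c)"
    unfolding th_def c_def using Om by (subst sums_Suc_iff) simp
  have c0: "0 \<le> c" unfolding c_def by simp
  have cs: "c + (1 - c) = 1" by simp
  have nz: "c \<noteq> 0 \<or> \<not> summable th"
    using Om unfolding c_def th_def by auto
  define em where "em l = c * l + (\<Sum>i. gg (th i) l)" for l
  have em_mono: "\<And>a b. 0 \<le> a \<Longrightarrow> a \<le> b \<Longrightarrow> em a \<le> em b"
    unfolding em_def using em_lip(1)[OF thnn s c0 cs] by blast
  have em_nn: "0 \<le> l \<Longrightarrow> 0 \<le> em l" for l
    using em_mono[of 0 l] by (simp add: em_def gg_def)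
  have em0: "em 0 = 0" by (simp add: em_def gg_def)
  have em_cont': "continuous_on {0..} em" unfolding em_def using em_cont[OF thnn s c0 cs] .
  have em_lim: "filterlim em at_top at_top" unfolding em_def using em_inf[OF thnn s c0 nz] .
  have Xmeas[measurable]: "\<And>i. X (Suc i) \<in> borel_measurable M"
    using assms(3) unfolding indep_vars_def by auto
  define T where "T w l = rand_mu \<theta> X w {0..l}" for w l
  have T_eq: "T w l = ennreal (c * l) + (\<Sum>i. ennreal (th i) * indicator {0..l} (X (Suc i) w))"
    if "0 \<le> l" for w l
    using that unfolding T_def rand_mu_def th_def c_def
    by (simp add: Int_absorb2 ennreal_mult)
  have T_mono: "T w a \<le> T w b" if "a \<le> b" for w a b
  proof -
    have "emeasure lborel ({0..a} \<inter> {0..}) \<le> emeasure lborel ({0..b} \<inter> {0..})"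
      using that by (intro emeasure_mono) auto
    moreover have "(\<Sum>i. ennreal (\<theta> (Suc i)) * indicator {0..a} (X (Suc i) w)) \<le> (\<Sum>i. ennreal (\<theta> (Suc i)) * indicator {0..b} (X (Suc i) w))"
      using that by (intro suminf_le mult_left_mono summableI) (auto simp: indicator_def)
    ultimately show ?thesis unfolding T_def rand_mu_def by (intro add_mono mult_left_mono) auto
  qed
  have Tmeas[measurable]: "(\<lambda>w. T w l) \<in> borel_measurable M" for l
    unfolding T_def rand_mu_def by measurable
  have prob_eq: "th i * prob {w\<in>space M. X (Suc i) w \<in> {0..l}} = gg (th i) l" if "0 \<le> l" for i l
  proof (cases "th i = 0")
    case True then show ?thesis by (simp add: gg_def)
  next
    case False
    then have tp: "0 < th i" using thnn[of i] by simp
    have D: "distributed M lborel (X (Suc i)) (exponential_density (th i))"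
      using assms(4)[of "Suc i"] tp by (simp add: th_def)
    have le: "\<P>(w in M. X (Suc i) w \<le> l) = 1 - exp (- l * th i)"
      by (rule exponential_distributedD_le[OF D that tp])
    have le0: "\<P>(w in M. X (Suc i) w \<le> 0) = 0"
      using exponential_distributedD_le[OF D _ tp, of 0] by simp
    have neg: "\<P>(w in M. X (Suc i) w < 0) = 0"
    proof -
      have "\<P>(w in M. X (Suc i) w < 0) \<le> \<P>(w in M. X (Suc i) w \<le> 0)"
        by (intro finite_measure_mono) auto
      then show ?thesis using le0 by (simp add: measure_nonneg antisym)
    qed
    have eqs: "{w\<in>space M. X (Suc i) w \<in> {0..l}} = {w\<in>space M. X (Suc i) w \<le> l} - {w\<in>space M. X (Suc i) w < 0}"
      by auto
    have "prob ({w\<in>space M. X (Suc i) w \<le> l} - {w\<in>space M. X (Suc i) w < 0}) = prob {w\<in>space M. X (Suc i) w \<le> l} - prob {w\<in>space M. X (Suc i) w < 0}"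
      using that by (intro finite_measure_Diff) auto
    then have "prob {w\<in>space M. X (Suc i) w \<in> {0..l}} = 1 - exp (- l * th i)"
      using le neg eqs by simp
    then show ?thesis by (simp add: gg_def mult.commute)
  qed
  have ET: "(\<integral>\<^sup>+w. T w l \<partial>M) = ennreal (em l)" if l: "0 \<le> l" for l
  proof -
    have "(\<integral>\<^sup>+w. T w l \<partial>M) = (\<integral>\<^sup>+w. ennreal (c * l) + (\<Sum>i. ennreal (th i) * indicator {0..l} (X (Suc i) w)) \<partial>M)"
      using T_eq[OF l] by simp
    also have "\<dots> = ennreal (c * l) + (\<integral>\<^sup>+w. (\<Sum>i. ennreal (th i) * indicator {0..l} (X (Suc i) w)) \<partial>M)"
      by (subst nn_integral_add) (auto simp: emeasure_space_1)
    also have "(\<integral>\<^sup>+w. (\<Sum>i. ennreal (th i) * indicator {0..l} (X (Suc i) w)) \<partial>M)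
        = (\<Sum>i. \<integral>\<^sup>+w. ennreal (th i) * indicator {0..l} (X (Suc i) w) \<partial>M)"
      by (rule nn_integral_suminf) measurable
    also have "\<dots> = (\<Sum>i. ennreal (gg (th i) l))"
    proof (intro suminf_cong)
      fix i
      have "(\<integral>\<^sup>+w. ennreal (th i) * indicator {0..l} (X (Suc i) w) \<partial>M)
          = (\<integral>\<^sup>+w. ennreal (th i) * indicator {w\<in>space M. X (Suc i) w \<in> {0..l}} w \<partial>M)"
        by (intro nn_integral_cong) (auto simp: indicator_def)
      also have "\<dots> = ennreal (th i) * emeasure M {w\<in>space M. X (Suc i) w \<in> {0..l}}"
        by (intro nn_integral_cmult_indicator) measurable
      also have "\<dots> = ennreal (th i) * ennreal (prob {w\<in>space M. X (Suc i) w \<in> {0..l}})"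
        by (simp only: emeasure_eq_measure)
      also have "\<dots> = ennreal (th i * prob {w\<in>space M. X (Suc i) w \<in> {0..l}})"
        by (rule ennreal_mult[OF thnn[of i] measure_nonneg, symmetric])
      also have "\<dots> = ennreal (gg (th i) l)"
        by (simp only: prob_eq[OF l])
      finally show "(\<integral>\<^sup>+w. ennreal (th i) * indicator {0..l} (X (Suc i) w) \<partial>M) = ennreal (gg (th i) l)" .
    qed
    also have "\<dots> = ennreal (\<Sum>i. gg (th i) l)"
      using gg_nonneg[OF thnn l] gg_summable[OF thnn s l] by (intro suminf_ennreal2) auto
    finally have "(\<integral>\<^sup>+w. T w l \<partial>M) = ennreal (c * l) + ennreal (\<Sum>i. gg (th i) l)" .
    moreover have "0 \<le> (\<Sum>i. gg (th i) l)"
      using gg_summable[OF thnn s l] gg_nonneg[OF thnn l] by (intro suminf_nonneg) auto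
    moreover have "0 \<le> c * l" using c0 l by simp
    ultimately show ?thesis unfolding em_def by (simp add: ennreal_plus)
  qed
  have cheb: "emeasure M {w\<in>space M. T w l \<noteq> \<infinity> \<and> k \<le> \<bar>enn2real (T w l) - em l\<bar>} \<le> ennreal (1 / k\<^sup>2)"
    if l: "0 \<le> l" and k: "0 < k" for l k
  proof -
    define p where "p i = prob (X (Suc i) -` {0..l} \<inter> space M)" for i
    define S where "S N w = (\<Sum>i<N. th i * (indicator {0..l} (X (Suc i) w) - p i))" for N w
    have Smeas[measurable]: "S N \<in> borel_measurable M" for N unfolding S_def by measurable
    have vb: "(\<integral>\<^sup>+w. ennreal ((S N w)\<^sup>2) \<partial>M) \<le> 1" for N
    proof -
      have "(\<integral>\<^sup>+w. ennreal ((\<Sum>i\<in>Suc ` {..<N}. \<theta> i * (indicator {0..l} (X i w) - prob (X i -` {0..l} \<inter> space M)))\<^sup>2) \<partial>M)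
          \<le> ennreal (\<Sum>i\<in>Suc ` {..<N}. (\<theta> i)\<^sup>2)"
        using Om by (intro var_bound[OF assms(3)]) auto
      moreover have "(\<Sum>i\<in>Suc ` {..<N}. f i) = (\<Sum>i<N. f (Suc i))" for f :: "nat \<Rightarrow> real"
        by (simp add: sum.reindex)
      moreover have "(\<Sum>i<N. (th i)\<^sup>2) \<le> 1 - c"
        using s by (metis sums_unique sums_summable sum_le_suminf finite_lessThan zero_le_power2)
      moreover have "1 - c \<le> 1" using c0 by simp
      ultimately have "(\<integral>\<^sup>+w. ennreal ((S N w)\<^sup>2) \<partial>M) \<le> ennreal (\<Sum>i<N. (th i)\<^sup>2)"
        unfolding S_def p_def th_def by simp
      also have "\<dots> \<le> 1" using \<open>(\<Sum>i<N. (th i)\<^sup>2) \<le> 1 - c\<close> c0 by (simp add: ennreal_le_1)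
      finally show ?thesis .
    qed
    define G where "G w = liminf (\<lambda>N. ennreal ((S N w)\<^sup>2))" for w
    have Gmeas[measurable]: "G \<in> borel_measurable M" unfolding G_def by measurable
    have Gint: "(\<integral>\<^sup>+w. G w \<partial>M) \<le> 1"
    proof -
      have "(\<integral>\<^sup>+w. G w \<partial>M) \<le> liminf (\<lambda>N. \<integral>\<^sup>+w. ennreal ((S N w)\<^sup>2) \<partial>M)"
        unfolding G_def by (intro nn_integral_liminf) measurable
      also have "\<dots> \<le> liminf (\<lambda>N. 1::ennreal)" by (intro Liminf_mono) (auto simp: vb)
      also have "\<dots> = 1" by (simp add: Liminf_const)
      finally show ?thesis .
    qed
    have pgg: "th i * p i = gg (th i) l" for i
    proof -
      have "X (Suc i) -` {0..l} \<inter> space M = {w\<in>space M. X (Suc i) w \<in> {0..l}}" by auto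
      then show ?thesis unfolding p_def using prob_eq[OF l, of i] by simp
    qed
    have key: "ennreal ((enn2real (T w l) - em l)\<^sup>2) = G w" if w: "T w l \<noteq> \<infinity>" for w
    proof -
      define r where "r i = th i * indicator {0..l} (X (Suc i) w)" for i
      have rnn: "0 \<le> r i" for i using thnn[of i] by (simp add: r_def)
      have re: "ennreal (r i) = ennreal (th i) * indicator {0..l} (X (Suc i) w)" for i
        by (simp add: r_def indicator_def)
      have Tr: "T w l = ennreal (c * l) + (\<Sum>i. ennreal (r i))" using T_eq[OF l, of w] re by simp
      then have "(\<Sum>i. ennreal (r i)) \<noteq> \<infinity>" using w by auto
      then have rs: "summable r" using summable_suminf_not_top[OF rnn] by auto
      have "T w l = ennreal (c * l + (\<Sum>i. r i))"
        using Tr suminf_ennreal2[OF rnn rs] c0 l rnn rs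
        by (simp add: ennreal_plus suminf_nonneg)
      moreover have "enn2real (ennreal (c * l + (\<Sum>i. r i))) = c * l + (\<Sum>i. r i)"
        using c0 l rnn rs by (intro enn2real_ennreal add_nonneg_nonneg suminf_nonneg mult_nonneg_nonneg) auto
      ultimately have Tv: "enn2real (T w l) = c * l + (\<Sum>i. r i)" by metis
      have ps: "summable (\<lambda>i. th i * p i)" unfolding pgg using gg_summable[OF thnn s l] .
      have SN: "S N w = (\<Sum>i<N. r i) - (\<Sum>i<N. th i * p i)" for N
        unfolding S_def r_def by (simp add: sum_subtractf right_diff_distrib)
      have "(\<lambda>N. S N w) \<longlonglongrightarrow> (\<Sum>i. r i) - (\<Sum>i. th i * p i)"
        unfolding SN by (intro tendsto_diff summable_LIMSEQ rs ps)
      moreover have "(\<Sum>i. r i) - (\<Sum>i. th i * p i) = enn2real (T w l) - em l"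
        unfolding Tv em_def pgg by simp
      ultimately have "(\<lambda>N. S N w) \<longlonglongrightarrow> enn2real (T w l) - em l" by simp
      then have "(\<lambda>N. ennreal ((S N w)\<^sup>2)) \<longlonglongrightarrow> ennreal ((enn2real (T w l) - em l)\<^sup>2)"
        by (intro tendsto_ennrealI tendsto_power)
      then have "liminf (\<lambda>N. ennreal ((S N w)\<^sup>2)) = ennreal ((enn2real (T w l) - em l)\<^sup>2)"
        by (rule lim_imp_Liminf[rotated]) simp
      then show ?thesis unfolding G_def by simp
    qed
    have sub: "{w\<in>space M. T w l \<noteq> \<infinity> \<and> k \<le> \<bar>enn2real (T w l) - em l\<bar>} \<subseteq> {w\<in>space M. 1 \<le> ennreal (1 / k\<^sup>2) * G w}"
    proof safe
      fix w assume w: "w \<in> space M" "T w l \<noteq> \<infinity>" "k \<le> \<bar>enn2real (T w l) - em l\<bar>"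
      define D where "D = enn2real (T w l) - em l"
      have "k\<^sup>2 \<le> D\<^sup>2" using w(3) k unfolding D_def
        by (metis abs_ge_zero less_imp_le power2_abs power_mono)
      then have "1 \<le> (1 / k\<^sup>2) * D\<^sup>2" using k by (simp add: field_simps)
      then have "ennreal 1 \<le> ennreal ((1 / k\<^sup>2) * D\<^sup>2)" by (rule ennreal_leI)
      also have "\<dots> = ennreal (1 / k\<^sup>2) * ennreal (D\<^sup>2)" by (rule ennreal_mult) auto
      also have "\<dots> = ennreal (1 / k\<^sup>2) * G w" using key[OF w(2)] unfolding D_def by simp
      finally show "1 \<le> ennreal (1 / k\<^sup>2) * G w" by simp
    qed
    have "emeasure M {w\<in>space M. T w l \<noteq> \<infinity> \<and> k \<le> \<bar>enn2real (T w l) - em l\<bar>}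
        \<le> emeasure M {w\<in>space M. 1 \<le> ennreal (1 / k\<^sup>2) * G w}"
      using sub by (intro emeasure_mono) measurable
    also have "\<dots> \<le> ennreal (1 / k\<^sup>2) * (\<integral>\<^sup>+w. G w * indicator (space M) w \<partial>M)"
      by (intro nn_integral_Markov_inequality) measurable
    also have "(\<integral>\<^sup>+w. G w * indicator (space M) w \<partial>M) = (\<integral>\<^sup>+w. G w \<partial>M)"
      by (intro nn_integral_cong) auto
    also have "ennreal (1 / k\<^sup>2) * (\<integral>\<^sup>+w. G w \<partial>M) \<le> ennreal (1 / k\<^sup>2) * 1"
      using Gint by (intro mult_left_mono) auto
    finally show ?thesis by simp
  qed
  have Lex: "\<exists>x. 0 \<le> x \<and> em x = (real n)\<^sup>2" for n
  proof -
    have "eventually (\<lambda>l. (real n)\<^sup>2 \<le> em l \<and> 0 \<le> l) at_top"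
      using em_lim eventually_ge_at_top[of 0] unfolding filterlim_at_top by (auto intro: eventually_conj)
    then obtain N where N: "\<And>l. l \<ge> N \<Longrightarrow> (real n)\<^sup>2 \<le> em l \<and> 0 \<le> l"
      unfolding eventually_at_top_linorder by blast
    define b where "b = max N 0"
    have b: "(real n)\<^sup>2 \<le> em b" "0 \<le> b" using N[of b] unfolding b_def by auto
    have cb: "continuous_on {0..b} em" using em_cont' by (rule continuous_on_subset) auto
    have "\<exists>x. 0 \<le> x \<and> x \<le> b \<and> em x = (real n)\<^sup>2"
      by (rule IVT'[OF _ b(1) b(2) cb]) (simp add: em0)
    then show ?thesis by blast
  qed
  define L where "L n = (SOME x. 0 \<le> x \<and> em x = (real n)\<^sup>2)" for n
  have L: "0 \<le> L n" "em (L n) = (real n)\<^sup>2" for n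
    using someI_ex[OF Lex[of n]] unfolding L_def by auto
  define B where "B n = {w\<in>space M. T w (L n) = \<infinity> \<or> max 1 (real n) \<le> \<bar>enn2real (T w (L n)) - (real n)\<^sup>2\<bar>}" for n
  have Bmeas[measurable]: "B n \<in> sets M" for n unfolding B_def by measurable
  have Tnull: "emeasure M {w\<in>space M. T w l = \<infinity>} = 0" if "0 \<le> l" for l
  proof -
    have "AE w in M. T w l \<noteq> \<infinity>"
      using nn_integral_PInf_AE[OF Tmeas] ET[OF that] by simp
    then show ?thesis by (subst (asm) AE_iff_measurable[OF _ refl]) auto
  qed
  have Bbound: "emeasure M (B n) \<le> ennreal (1 / (max 1 (real n))\<^sup>2)" for n
  proof -
    have "B n \<subseteq> {w\<in>space M. T w (L n) = \<infinity>} \<union> {w\<in>space M. T w (L n) \<noteq> \<infinity> \<and> max 1 (real n) \<le> \<bar>enn2real (T w (L n)) - em (L n)\<bar>}"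
      unfolding B_def using L(2)[of n] by auto
    then have "emeasure M (B n) \<le> emeasure M ({w\<in>space M. T w (L n) = \<infinity>} \<union> {w\<in>space M. T w (L n) \<noteq> \<infinity> \<and> max 1 (real n) \<le> \<bar>enn2real (T w (L n)) - em (L n)\<bar>})"
      by (intro emeasure_mono) measurable
    also have "\<dots> \<le> emeasure M {w\<in>space M. T w (L n) = \<infinity>} + emeasure M {w\<in>space M. T w (L n) \<noteq> \<infinity> \<and> max 1 (real n) \<le> \<bar>enn2real (T w (L n)) - em (L n)\<bar>}"
      by (intro emeasure_subadditive) measurable
    also have "\<dots> \<le> 0 + ennreal (1 / (max 1 (real n))\<^sup>2)"
      using Tnull[OF L(1)] cheb[OF L(1), of "max 1 (real n)"] by (intro add_mono) auto
    finally show ?thesis by simp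
  qed
  have Bsum: "summable (\<lambda>n. measure M (B n))"
  proof (rule summable_comparison_test)
    show "\<exists>N. \<forall>n\<ge>N. norm (measure M (B n)) \<le> 1 / (max 1 (real n))\<^sup>2"
    proof (intro exI allI impI)
      fix n :: nat
      have "ennreal (measure M (B n)) \<le> ennreal (1 / (max 1 (real n))\<^sup>2)"
        using Bbound[of n] by (simp add: emeasure_eq_measure)
      then show "norm (measure M (B n)) \<le> 1 / (max 1 (real n))\<^sup>2"
        by (simp add: ennreal_le_iff)
    qed
    have "summable (\<lambda>n. inverse (real n ^ 2))" by (rule inverse_power_summable) simp
    moreover have "eventually (\<lambda>n. inverse (real n ^ 2) = 1 / (max 1 (real n))\<^sup>2) sequentially"
      using eventually_ge_at_top[of "1::nat"] by eventually_elim (simp add: max_def divide_inverse)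
    ultimately show "summable (\<lambda>n. 1 / (max 1 (real n))\<^sup>2)" using summable_cong by metis
  qed
  have BC: "AE w in M. eventually (\<lambda>n. w \<in> space M - B n) sequentially"
    by (rule borel_cantelli_AE1[OF Bmeas _ Bsum]) (simp add: less_top[symmetric])
  have RHS: "eventually (\<lambda>l. em l = enn2real (\<integral>\<^sup>+v. rand_mu \<theta> X v {0..l} \<partial>M)) at_top"
    using eventually_ge_at_top[of 0]
  proof eventually_elim
    case (elim l)
    then show ?case using ET[OF elim] em_nn[OF elim] unfolding T_def by simp
  qed
  show ?thesis using BC
  proof (rule eventually_mono)
    fix w assume ev: "eventually (\<lambda>n. w \<in> space M - B n) sequentially"
    have ev': "eventually (\<lambda>n. T w (L n) \<noteq> \<infinity> \<and> \<bar>enn2real (T w (L n)) - (real n)\<^sup>2\<bar> < real n) sequentially"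
      using ev eventually_ge_at_top[of "1::nat"]
    proof eventually_elim
      case (elim n)
      then have "max 1 (real n) = real n" by simp
      with elim show ?case unfolding B_def by auto
    qed
    have "(\<lambda>l. enn2real (T w l)) \<sim>[at_top] em"
      by (rule det_asymp[where L=L, OF T_mono em_mono L(1) L(2) em_lim ev'])
    then show "(\<lambda>l. enn2real (rand_mu \<theta> X w {0..l})) \<sim>[at_top] (\<lambda>l. enn2real (\<integral>\<^sup>+v. rand_mu \<theta> X v {0..l} \<partial>M))"
      unfolding T_def using asymp_equiv_trans asymp_equiv_refl_ev[OF RHS] by blast
  qed
qed


end
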